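(* Let $(\Omega,\mathcal A,\mu)$ be a measure space, $X$ a real locally convex space, and $L$ a locally convex space of $\mathcal A$-measurable functions $u:\Omega\to X$ such that $L$ is barreled, $u\mapsto\chi_Au$ is a well-defined continuous map $L\to L$ for every $A\in\mathcal A$, and $\{\chi_Au:A\in\mathcal A\}$ is bounded in $L$ for every $u\in L$. For an isotone (or antitone) net $(\Omega_\alpha)$ in $\mathcal A$ let $\lim_\alpha P_\alpha$ denote the pointwise $\sigma(L',L)$-limit of the adjoints $P_\alpha$ of $u\mapsto\chi_{\Omega_\alpha}u$. If two isotone nets $(\Omega_\alpha)$, $(\Omega'_{\alpha'})$ in $\mathcal A$ are eventually contained in each other, i.e. for every $\alpha$ there is $\alpha'_0$ with $\Omega_\alpha\subseteq\Omega'_{\alpha'}$ for all $\alpha'\ge\alpha'_0$, and for every $\alpha'$ there is $\alpha_0$ with $\Omega'_{\alpha'}\subseteq\Omega_\alpha$ for all $\alpha\ge\alpha_0$ (with reversed inclusions in the case of two antitone nets), then $\lim_\alpha P_\alpha=\lim_{\alpha'}P_{\alpha'}$. In particular, if $\mathfrak S\subset\mathcal A$ is a system of measurable sets, then the limit projector is the same for every isotone net $(\Omega_\alpha)$ with all $\Omega_\alpha\in\mathfrak S$ such that each $S\in\mathfrak S$ is eventually contained in $\Omega_\alpha$.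
   Context: The pointwise weak* limit of the adjoints exists for every isotone or antitone net and is a continuous linear projector on $L'$. *)

theory Defs
  imports "HOL-Analysis.Analysis"
begin

definition seminorm_on :: "'v::real_vector set \<Rightarrow> ('v \<Rightarrow> real) \<Rightarrow> bool" where
  "seminorm_on V p \<longleftrightarrow>
     (\<forall>x\<in>V. p x \<ge> 0) \<and>
     (\<forall>x\<in>V. \<forall>y\<in>V. p (x + y) \<le> p x + p y) \<and>
     (\<forall>x\<in>V. \<forall>c. p (c *\<^sub>R x) = \<bar>c\<bar> * p x)"

definition subspace_on :: "'v::real_vector set \<Rightarrow> bool" where
  "subspace_on V \<longleftrightarrow> 0 \<in> V \<and> (\<forall>x\<in>V. \<forall>y\<in>V. x + y \<in> V) \<and> (\<forall>x\<in>V. \<forall>c. c *\<^sub>R x \<in> V)"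

definition lc_topology :: "'v::real_vector set \<Rightarrow> ('k \<Rightarrow> 'v \<Rightarrow> real) \<Rightarrow> 'v topology" where
  "lc_topology V q = topology (\<lambda>U. U \<subseteq> V \<and>
     (\<forall>x\<in>U. \<exists>F e. finite F \<and> e > 0 \<and> {y\<in>V. \<forall>k\<in>F. q k (y - x) < e} \<subseteq> U))"

definition lc_space :: "'v::real_vector set \<Rightarrow> ('k \<Rightarrow> 'v \<Rightarrow> real) \<Rightarrow> bool" where
  "lc_space V q \<longleftrightarrow> subspace_on V \<and> (\<forall>k. seminorm_on V (q k))"

definition fadd :: "('a \<Rightarrow> 'x::real_vector) \<Rightarrow> ('a \<Rightarrow> 'x) \<Rightarrow> 'a \<Rightarrow> 'x" where
  "fadd u v = (\<lambda>w. u w + v w)"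

definition fscale :: "real \<Rightarrow> ('a \<Rightarrow> 'x::real_vector) \<Rightarrow> 'a \<Rightarrow> 'x" where
  "fscale c u = (\<lambda>w. c *\<^sub>R u w)"

definition fzero :: "'a \<Rightarrow> 'x::real_vector" where
  "fzero = (\<lambda>w. 0)"

definition chi_mult :: "'a set \<Rightarrow> ('a \<Rightarrow> 'x::real_vector) \<Rightarrow> 'a \<Rightarrow> 'x" where
  "chi_mult A u = (\<lambda>w. indicator A w *\<^sub>R u w)"

definition fsubspace :: "('a \<Rightarrow> 'x::real_vector) set \<Rightarrow> bool" where
  "fsubspace L \<longleftrightarrow> fzero \<in> L \<and> (\<forall>u\<in>L. \<forall>v\<in>L. fadd u v \<in> L) \<and> (\<forall>u\<in>L. \<forall>c. fscale c u \<in> L)"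

definition fseminorm_on :: "('a \<Rightarrow> 'x::real_vector) set \<Rightarrow> (('a \<Rightarrow> 'x) \<Rightarrow> real) \<Rightarrow> bool" where
  "fseminorm_on L p \<longleftrightarrow>
     (\<forall>u\<in>L. p u \<ge> 0) \<and>
     (\<forall>u\<in>L. \<forall>v\<in>L. p (fadd u v) \<le> p u + p v) \<and>
     (\<forall>u\<in>L. \<forall>c. p (fscale c u) = \<bar>c\<bar> * p u)"

definition flc_topology :: "('a \<Rightarrow> 'x::real_vector) set \<Rightarrow> ('k \<Rightarrow> ('a \<Rightarrow> 'x) \<Rightarrow> real) \<Rightarrow> ('a \<Rightarrow> 'x) topology" where
  "flc_topology L q = topology (\<lambda>U. U \<subseteq> L \<and>
     (\<forall>u\<in>U. \<exists>F e. finite F \<and> e > 0 \<and>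
        {v\<in>L. \<forall>k\<in>F. q k (fadd v (fscale (-1) u)) < e} \<subseteq> U))"

definition flc_space :: "('a \<Rightarrow> 'x::real_vector) set \<Rightarrow> ('k \<Rightarrow> ('a \<Rightarrow> 'x) \<Rightarrow> real) \<Rightarrow> bool" where
  "flc_space L q \<longleftrightarrow> fsubspace L \<and> (\<forall>k. fseminorm_on L (q k))"

definition fbarrel :: "('a \<Rightarrow> 'x::real_vector) set \<Rightarrow> ('k \<Rightarrow> ('a \<Rightarrow> 'x) \<Rightarrow> real) \<Rightarrow> ('a \<Rightarrow> 'x) set \<Rightarrow> bool" where
  "fbarrel L q B \<longleftrightarrow> B \<subseteq> L \<and> closedin (flc_topology L q) B \<and>
     (\<forall>u\<in>B. \<forall>v\<in>B. \<forall>t. 0 \<le> t \<and> t \<le> 1 \<longrightarrow> fadd (fscale t u) (fscale (1 - t) v) \<in> B) \<and>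
     (\<forall>u\<in>B. \<forall>c. \<bar>c\<bar> \<le> 1 \<longrightarrow> fscale c u \<in> B) \<and>
     (\<forall>u\<in>L. \<exists>r>0. \<forall>c. \<bar>c\<bar> \<le> r \<longrightarrow> fscale c u \<in> B)"

definition barreled :: "('a \<Rightarrow> 'x::real_vector) set \<Rightarrow> ('k \<Rightarrow> ('a \<Rightarrow> 'x) \<Rightarrow> real) \<Rightarrow> bool" where
  "barreled L q \<longleftrightarrow> (\<forall>B. fbarrel L q B \<longrightarrow>
     (\<exists>U. openin (flc_topology L q) U \<and> fzero \<in> U \<and> U \<subseteq> B))"

definition fbounded :: "('a \<Rightarrow> 'x::real_vector) set \<Rightarrow> ('k \<Rightarrow> ('a \<Rightarrow> 'x) \<Rightarrow> real) \<Rightarrow> ('a \<Rightarrow> 'x) set \<Rightarrow> bool" where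
  "fbounded L q B \<longleftrightarrow> B \<subseteq> L \<and> (\<forall>U. openin (flc_topology L q) U \<and> fzero \<in> U \<longrightarrow>
     (\<exists>t>0. \<forall>s. \<bar>s\<bar> \<ge> t \<longrightarrow> B \<subseteq> fscale s ` U))"

definition fdual :: "('a \<Rightarrow> 'x::real_vector) set \<Rightarrow> ('k \<Rightarrow> ('a \<Rightarrow> 'x) \<Rightarrow> real) \<Rightarrow> (('a \<Rightarrow> 'x) \<Rightarrow> real) set" where
  "fdual L q = {\<phi>. (\<forall>u\<in>L. \<forall>v\<in>L. \<phi> (fadd u v) = \<phi> u + \<phi> v) \<and>
                  (\<forall>u\<in>L. \<forall>c. \<phi> (fscale c u) = c * \<phi> u) \<and>
                  continuous_map (flc_topology L q) euclidean \<phi>}"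

definition directed_on :: "'i set \<Rightarrow> ('i \<Rightarrow> 'i \<Rightarrow> bool) \<Rightarrow> bool" where
  "directed_on I le \<longleftrightarrow> I \<noteq> {} \<and> (\<forall>a\<in>I. le a a) \<and>
     (\<forall>a\<in>I. \<forall>b\<in>I. \<forall>c\<in>I. le a b \<and> le b c \<longrightarrow> le a c) \<and>
     (\<forall>a\<in>I. \<forall>b\<in>I. \<exists>c\<in>I. le a c \<and> le b c)"

definition net_eventually :: "'i set \<Rightarrow> ('i \<Rightarrow> 'i \<Rightarrow> bool) \<Rightarrow> ('i \<Rightarrow> bool) \<Rightarrow> bool" where
  "net_eventually I le P \<longleftrightarrow> (\<exists>a0\<in>I. \<forall>a\<in>I. le a0 a \<longrightarrow> P a)"

definition net_tendsto :: "'i set \<Rightarrow> ('i \<Rightarrow> 'i \<Rightarrow> bool) \<Rightarrow> ('i \<Rightarrow> real) \<Rightarrow> real \<Rightarrow> bool" where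
  "net_tendsto I le f c \<longleftrightarrow> (\<forall>e>0. net_eventually I le (\<lambda>a. \<bar>f a - c\<bar> < e))"

definition isotone_net :: "'i set \<Rightarrow> ('i \<Rightarrow> 'i \<Rightarrow> bool) \<Rightarrow> ('i \<Rightarrow> 'a set) \<Rightarrow> bool" where
  "isotone_net I le \<Omega> \<longleftrightarrow> (\<forall>a\<in>I. \<forall>b\<in>I. le a b \<longrightarrow> \<Omega> a \<subseteq> \<Omega> b)"

definition antitone_net :: "'i set \<Rightarrow> ('i \<Rightarrow> 'i \<Rightarrow> bool) \<Rightarrow> ('i \<Rightarrow> 'a set) \<Rightarrow> bool" where
  "antitone_net I le \<Omega> \<longleftrightarrow> (\<forall>a\<in>I. \<forall>b\<in>I. le a b \<longrightarrow> \<Omega> b \<subseteq> \<Omega> a)"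

text \<open>psi is the pointwise sigma(L',L)-limit of the adjoints P_a phi = phi o (u |-> chi_{Omega a} u).\<close>
definition weakstar_adj_limit ::
  "('a \<Rightarrow> 'x::real_vector) set \<Rightarrow> 'i set \<Rightarrow> ('i \<Rightarrow> 'i \<Rightarrow> bool) \<Rightarrow> ('i \<Rightarrow> 'a set)
     \<Rightarrow> (('a \<Rightarrow> 'x) \<Rightarrow> real) \<Rightarrow> (('a \<Rightarrow> 'x) \<Rightarrow> real) \<Rightarrow> bool" where
  "weakstar_adj_limit L I le \<Omega> \<phi> \<psi> \<longleftrightarrow>
     (\<forall>u\<in>L. net_tendsto I le (\<lambda>a. \<phi> (chi_mult (\<Omega> a) u)) (\<psi> u))"

definition same_adj_limit ::
  "('a \<Rightarrow> 'x::real_vector) set \<Rightarrow> ('k \<Rightarrow> ('a \<Rightarrow> 'x) \<Rightarrow> real) \<Rightarrow>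
     'i set \<Rightarrow> ('i \<Rightarrow> 'i \<Rightarrow> bool) \<Rightarrow> ('i \<Rightarrow> 'a set) \<Rightarrow>
     'j set \<Rightarrow> ('j \<Rightarrow> 'j \<Rightarrow> bool) \<Rightarrow> ('j \<Rightarrow> 'a set) \<Rightarrow> bool" where
  "same_adj_limit L q I le \<Omega> J le' \<Omega>' \<longleftrightarrow>
     (\<forall>\<phi>\<in>fdual L q. \<exists>\<psi>\<in>fdual L q.
        weakstar_adj_limit L I le \<Omega> \<phi> \<psi> \<and> weakstar_adj_limit L J le' \<Omega>' \<phi> \<psi>)"

end

theory Submission
  imports Defs
begin


lemma flc_istop: fixes q :: "'k \<Rightarrow> ('a \<Rightarrow> 'x::real_vector) \<Rightarrow> real" shows "istopology (\<lambda>U. U \<subseteq> L \<and>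
     (\<forall>u\<in>U. \<exists>F e. finite F \<and> e > 0 \<and>
        {v\<in>L. \<forall>k\<in>F. q k (fadd v (fscale (-1) u)) < e} \<subseteq> U))"
  unfolding istopology_def
proof (rule conjI; intro allI impI)
  fix S T assume S: "S \<subseteq> L \<and> (\<forall>u\<in>S. \<exists>F e. finite F \<and> e > 0 \<and>
        {v\<in>L. \<forall>k\<in>F. q k (fadd v (fscale (-1) u)) < e} \<subseteq> S)"
    and T: "T \<subseteq> L \<and> (\<forall>u\<in>T. \<exists>F e. finite F \<and> e > 0 \<and>
        {v\<in>L. \<forall>k\<in>F. q k (fadd v (fscale (-1) u)) < e} \<subseteq> T)"
  show "S \<inter> T \<subseteq> L \<and> (\<forall>u\<in>S \<inter> T. \<exists>F e. finite F \<and> e > 0 \<and>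
        {v\<in>L. \<forall>k\<in>F. q k (fadd v (fscale (-1) u)) < e} \<subseteq> S \<inter> T)"
  proof (intro conjI ballI)
    show "S \<inter> T \<subseteq> L" using S by blast
    fix u assume "u \<in> S \<inter> T"
    then have uS: "u \<in> S" and uT: "u \<in> T" by auto
    obtain F1 e1 where 1: "finite F1" "e1 > 0" "{v\<in>L. \<forall>k\<in>F1. q k (fadd v (fscale (-1) u)) < e1} \<subseteq> S"
      using S uS by blast
    obtain F2 e2 where 2: "finite F2" "e2 > 0" "{v\<in>L. \<forall>k\<in>F2. q k (fadd v (fscale (-1) u)) < e2} \<subseteq> T"
      using T uT by blast
    show "\<exists>F e. finite F \<and> e > 0 \<and>
        {v\<in>L. \<forall>k\<in>F. q k (fadd v (fscale (-1) u)) < e} \<subseteq> S \<inter> T"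
      apply (rule exI[of _ "F1 \<union> F2"], rule exI[of _ "min e1 e2"])
      apply (intro conjI)
      using 1 2 by auto
  qed
next
  fix K assume K: "\<forall>U\<in>K. U \<subseteq> L \<and>
     (\<forall>u\<in>U. \<exists>F e. finite F \<and> e > 0 \<and>
        {v\<in>L. \<forall>k\<in>F. q k (fadd v (fscale (-1) u)) < e} \<subseteq> U)"
  show "\<Union>K \<subseteq> L \<and>
     (\<forall>u\<in>\<Union>K. \<exists>F e. finite F \<and> e > 0 \<and>
        {v\<in>L. \<forall>k\<in>F. q k (fadd v (fscale (-1) u)) < e} \<subseteq> \<Union>K)"
  proof (intro conjI ballI)
    show "\<Union>K \<subseteq> L" using K by blast
    fix u assume "u \<in> \<Union>K"
    then obtain U where "U \<in> K" "u \<in> U" by blast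
    then obtain F e where "finite F \<and> e > 0 \<and>
        {v\<in>L. \<forall>k\<in>F. q k (fadd v (fscale (-1) u)) < e} \<subseteq> U" using K by meson
    then show "\<exists>F e. finite F \<and> e > 0 \<and>
        {v\<in>L. \<forall>k\<in>F. q k (fadd v (fscale (-1) u)) < e} \<subseteq> \<Union>K"
      using \<open>U \<in> K\<close> by blast
  qed
qed

lemma flc_open: "openin (flc_topology L q) U \<longleftrightarrow> U \<subseteq> L \<and>
     (\<forall>u\<in>U. \<exists>F e. finite F \<and> e > 0 \<and>
        {v\<in>L. \<forall>k\<in>F. q k (fadd v (fscale (-1) u)) < e} \<subseteq> U)"
  unfolding flc_topology_def topology_inverse'[OF flc_istop] by (rule refl)

lemma flc_topspace: "topspace (flc_topology L q) = L"
proof -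
  have "openin (flc_topology L q) L"
    unfolding flc_open by (intro conjI ballI subset_refl exI[of _ "{}"] exI[of _ "1::real"]) auto
  moreover have "\<And>U. openin (flc_topology L q) U \<Longrightarrow> U \<subseteq> L" using flc_open by blast
  ultimately show ?thesis unfolding topspace_def by blast
qed

lemma ev_conj:
  assumes "directed_on I le" "net_eventually I le P" "net_eventually I le Q"
  shows "net_eventually I le (\<lambda>a. P a \<and> Q a)"
proof -
  obtain a b where a: "a \<in> I" "\<forall>x\<in>I. le a x \<longrightarrow> P x" and b: "b \<in> I" "\<forall>x\<in>I. le b x \<longrightarrow> Q x"
    using assms(2,3) unfolding net_eventually_def by blast
  obtain c where c: "c \<in> I" "le a c" "le b c" using assms(1) a b unfolding directed_on_def by blast
  show ?thesis unfolding net_eventually_def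
    using a b c assms(1) unfolding directed_on_def by blast
qed

lemma ev_ex:
  assumes "directed_on I le" "net_eventually I le P"
  shows "\<exists>a\<in>I. P a"
  using assms unfolding net_eventually_def directed_on_def by blast

lemma ev_mono:
  assumes "net_eventually I le P" "\<And>a. a \<in> I \<Longrightarrow> P a \<Longrightarrow> Q a"
  shows "net_eventually I le Q"
  using assms unfolding net_eventually_def by blast

lemma tendsto_cong:
  assumes "net_tendsto I le f c" "\<And>a. a \<in> I \<Longrightarrow> f a = g a"
  shows "net_tendsto I le g c"
  using assms unfolding net_tendsto_def net_eventually_def by metis

lemma tendsto_unique:
  assumes d: "directed_on I le" and "net_tendsto I le f c" "net_tendsto I le f d"
  shows "c = d"
proof (rule ccontr)
  assume "c \<noteq> d"
  then have e: "\<bar>c - d\<bar> / 2 > 0" by simp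
  have "net_eventually I le (\<lambda>a. \<bar>f a - c\<bar> < \<bar>c - d\<bar> / 2 \<and> \<bar>f a - d\<bar> < \<bar>c - d\<bar> / 2)"
    apply (rule ev_conj[OF d])
    using assms(2,3) e unfolding net_tendsto_def by blast+
  then obtain a where "\<bar>f a - c\<bar> < \<bar>c - d\<bar> / 2 \<and> \<bar>f a - d\<bar> < \<bar>c - d\<bar> / 2"
    using ev_ex[OF d] by blast
  then show False by (auto simp: abs_less_iff abs_if split: if_splits)
qed

lemma tendsto_add:
  assumes d: "directed_on I le" and "net_tendsto I le f c" "net_tendsto I le g d"
  shows "net_tendsto I le (\<lambda>a. f a + g a) (c + d)"
  unfolding net_tendsto_def
proof (intro allI impI)
  fix e :: real assume "e > 0"
  then have e2: "e/2 > 0" by simp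
  have "net_eventually I le (\<lambda>a. \<bar>f a - c\<bar> < e/2 \<and> \<bar>g a - d\<bar> < e/2)"
    apply (rule ev_conj[OF d])
    using assms(2,3) e2 unfolding net_tendsto_def by blast+
  then show "net_eventually I le (\<lambda>a. \<bar>f a + g a - (c + d)\<bar> < e)"
    by (rule ev_mono) linarith
qed

lemma tendsto_neg:
  assumes "net_tendsto I le f c"
  shows "net_tendsto I le (\<lambda>a. - f a) (- c)"
  using assms unfolding net_tendsto_def by (smt (verit) ev_mono)

lemma tendsto_cmult:
  assumes "net_tendsto I le f c"
  shows "net_tendsto I le (\<lambda>a. r * f a) (r * c)"
  unfolding net_tendsto_def
proof (intro allI impI)
  fix e :: real assume e: "e > 0"
  then have "net_eventually I le (\<lambda>a. \<bar>f a - c\<bar> < e / (\<bar>r\<bar> + 1))"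
    using assms unfolding net_tendsto_def by simp
  then show "net_eventually I le (\<lambda>a. \<bar>r * f a - r * c\<bar> < e)"
  proof (rule ev_mono)
    fix a assume h: "\<bar>f a - c\<bar> < e / (\<bar>r\<bar> + 1)"
    have "\<bar>r * f a - r * c\<bar> = \<bar>r\<bar> * \<bar>f a - c\<bar>" by (simp add: abs_mult right_diff_distrib[symmetric])
    also have "\<dots> \<le> (\<bar>r\<bar> + 1) * \<bar>f a - c\<bar>" by (simp add: mult_right_mono)
    also have "\<dots> < (\<bar>r\<bar> + 1) * (e / (\<bar>r\<bar> + 1))"
      using h by (intro mult_strict_left_mono) auto
    also have "\<dots> = e" by simp
    finally show "\<bar>r * f a - r * c\<bar> < e" .
  qed
qed

lemma tendsto_incr:
  assumes d: "directed_on I le" and mono: "\<And>a b. a \<in> I \<Longrightarrow> b \<in> I \<Longrightarrow> le a b \<Longrightarrow> f a \<le> f b"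
    and bd: "\<And>a. a \<in> I \<Longrightarrow> f a \<le> K"
  shows "net_tendsto I le f (SUP a\<in>I. f a)"
  unfolding net_tendsto_def
proof (intro allI impI)
  fix e :: real assume e: "e > 0"
  have ne: "I \<noteq> {}" using d unfolding directed_on_def by blast
  have bdd: "bdd_above (f ` I)" by (rule bdd_aboveI2[of _ _ K]) (rule bd)
  have "\<exists>a\<in>I. (SUP a\<in>I. f a) - e < f a"
  proof (rule ccontr)
    assume "\<not> ?thesis"
    then have "(SUP a\<in>I. f a) \<le> (SUP a\<in>I. f a) - e" using ne by (intro cSUP_least) auto
    then show False using e by simp
  qed
  then obtain a0 where a0: "a0 \<in> I" "(SUP a\<in>I. f a) - e < f a0" by blast
  show "net_eventually I le (\<lambda>a. \<bar>f a - (SUP a\<in>I. f a)\<bar> < e)"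
    unfolding net_eventually_def
  proof (intro bexI[OF _ a0(1)] ballI impI)
    fix a assume "a \<in> I" "le a0 a"
    then have "f a0 \<le> f a" "f a \<le> (SUP a\<in>I. f a)" using mono a0 bdd by (auto intro: cSUP_upper)
    then show "\<bar>f a - (SUP a\<in>I. f a)\<bar> < e" using a0 by linarith
  qed
qed

lemma tendsto_decr:
  assumes d: "directed_on I le" and mono: "\<And>a b. a \<in> I \<Longrightarrow> b \<in> I \<Longrightarrow> le a b \<Longrightarrow> f b \<le> f a"
    and bd: "\<And>a. a \<in> I \<Longrightarrow> - K \<le> f a"
  shows "\<exists>c. net_tendsto I le f c"
proof -
  have "net_tendsto I le (\<lambda>a. - f a) (SUP a\<in>I. - f a)"
    using assms by (intro tendsto_incr[of _ _ _ K]) force+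
  from tendsto_neg[OF this] show ?thesis by auto
qed

lemma tendsto_le:
  assumes dI: "directed_on I le" and dJ: "directed_on J le'"
    and f: "net_tendsto I le f c" and g: "net_tendsto J le' g d"
    and h: "\<forall>a\<in>I. net_eventually J le' (\<lambda>b. f a \<le> g b)"
  shows "c \<le> d"
proof (rule ccontr)
  assume "\<not> c \<le> d"
  then have e: "(c - d) / 2 > 0" by simp
  obtain a where a: "a \<in> I" "\<bar>f a - c\<bar> < (c - d) / 2"
    using f e ev_ex[OF dI] unfolding net_tendsto_def by blast
  have "net_eventually J le' (\<lambda>b. f a \<le> g b \<and> \<bar>g b - d\<bar> < (c - d) / 2)"
    apply (rule ev_conj[OF dJ])
    using h a g e unfolding net_tendsto_def by blast+
  then obtain b where b1: "f a \<le> g b" and b2: "\<bar>g b - d\<bar> < (c - d) / 2" using ev_ex[OF dJ] by blast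
  have "c - f a < (c - d) / 2" using abs_less_iff[THEN iffD1, OF a(2)] by argo
  moreover have "g b - d < (c - d) / 2" using abs_less_iff[THEN iffD1, OF b2] by argo
  ultimately show False using b1 by argo
qed

lemma tendsto_bound:
  assumes d: "directed_on I le" and "net_tendsto I le f c" and "\<And>a. a \<in> I \<Longrightarrow> \<bar>f a\<bar> \<le> B"
  shows "\<bar>c\<bar> \<le> B"
proof (rule ccontr)
  assume "\<not> ?thesis"
  then have "\<bar>c\<bar> - B > 0" by simp
  then obtain a where "a \<in> I" "\<bar>f a - c\<bar> < \<bar>c\<bar> - B"
    using assms ev_ex[OF d] unfolding net_tendsto_def by blast
  then show False using assms(3)[of a] by linarith
qed



lemma chi_add: "chi_mult A (fadd u v) = fadd (chi_mult A u) (chi_mult A v)"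
  by (simp add: chi_mult_def fadd_def fun_eq_iff scaleR_add_right)
lemma chi_scale: "chi_mult A (fscale c u) = fscale c (chi_mult A u)"
  by (simp add: chi_mult_def fscale_def fun_eq_iff)
lemma chi_split: "X \<subseteq> Y \<Longrightarrow> chi_mult Y u = fadd (chi_mult X u) (chi_mult (Y - X) u)"
  by (auto simp: chi_mult_def fadd_def fun_eq_iff indicator_def)
lemma fscale0: "fscale 0 u = fzero" by (simp add: fscale_def fzero_def)
lemma fadd_zero_neg: "fadd v (fscale (-1) fzero) = v" by (simp add: fscale_def fzero_def fadd_def)

lemma cont_lemma:
  fixes q :: "'k \<Rightarrow> ('a \<Rightarrow> 'x::real_vector) \<Rightarrow> real" and M :: "'a measure"
  assumes L_lc: "flc_space L q" and bar: "barreled L q"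
  and cc: "\<forall>A\<in>sets M. \<forall>u\<in>L. chi_mult A u \<in> L"
  and ct: "\<forall>A\<in>sets M. continuous_map (flc_topology L q) (flc_topology L q) (chi_mult A)"
  and bdd: "\<forall>u\<in>L. fbounded L q {chi_mult A u | A. A \<in> sets M}"
  and phi: "\<phi> \<in> fdual L q"
  and padd: "\<forall>u\<in>L. \<forall>v\<in>L. \<psi> (fadd u v) = \<psi> u + \<psi> v" and psc: "\<forall>u\<in>L. \<forall>c. \<psi> (fscale c u) = c * \<psi> u"
  and H: "\<And>u. u \<in> L \<Longrightarrow> (\<forall>A\<in>sets M. \<bar>\<phi> (chi_mult A u)\<bar> \<le> 1) \<Longrightarrow> \<bar>\<psi> u\<bar> \<le> 1"
  shows "\<psi> \<in> fdual L q"
proof -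
  have z: "fzero \<in> L" and La: "\<And>u v. u \<in> L \<Longrightarrow> v \<in> L \<Longrightarrow> fadd u v \<in> L"
    and Ls: "\<And>u c. u \<in> L \<Longrightarrow> fscale c u \<in> L"
    using L_lc unfolding flc_space_def fsubspace_def by auto
  have qs: "\<And>k u c. u \<in> L \<Longrightarrow> q k (fscale c u) = \<bar>c\<bar> * q k u"
    using L_lc unfolding flc_space_def fseminorm_on_def by auto
  have phia: "\<And>u v. u \<in> L \<Longrightarrow> v \<in> L \<Longrightarrow> \<phi> (fadd u v) = \<phi> u + \<phi> v"
    and phis: "\<And>u c. u \<in> L \<Longrightarrow> \<phi> (fscale c u) = c * \<phi> u"
    and phic: "continuous_map (flc_topology L q) euclidean \<phi>"
    using phi unfolding fdual_def by auto
  have phi0: "\<phi> fzero = 0" using phis[OF z, of 0] by (simp add: fscale0)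
  have bnd: "\<exists>t>0. \<forall>A\<in>sets M. \<bar>\<phi> (chi_mult A u)\<bar> \<le> t" if u: "u \<in> L" for u
  proof -
    define U0 where "U0 = {v \<in> topspace (flc_topology L q). \<phi> v \<in> ball 0 1}"
    have "openin (flc_topology L q) U0" unfolding U0_def
      by (rule openin_continuous_map_preimage[OF phic]) auto
    moreover have "fzero \<in> U0" unfolding U0_def flc_topspace using z phi0 by simp
    ultimately obtain t where t: "t > 0" "\<forall>s. \<bar>s\<bar> \<ge> t \<longrightarrow> {chi_mult A u | A. A \<in> sets M} \<subseteq> fscale s ` U0"
      using bdd u unfolding fbounded_def by blast
    show ?thesis
    proof (intro exI[of _ t] conjI ballI)
      fix A assume A: "A \<in> sets M"
      have "{chi_mult A u | A. A \<in> sets M} \<subseteq> fscale t ` U0" using t(2) abs_ge_self[of t] by blast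
      then have "chi_mult A u \<in> fscale t ` U0" using A by blast
      then obtain v where v: "v \<in> U0" "chi_mult A u = fscale t v" by blast
      then have "v \<in> L" "\<bar>\<phi> v\<bar> < 1" unfolding U0_def flc_topspace by auto
      then have "\<bar>\<phi> (chi_mult A u)\<bar> = t * \<bar>\<phi> v\<bar>" using v phis t by (simp add: abs_mult)
      also have "\<dots> \<le> t * 1" using \<open>\<bar>\<phi> v\<bar> < 1\<close> t by (intro mult_left_mono) auto
      finally show "\<bar>\<phi> (chi_mult A u)\<bar> \<le> t" by simp
    qed (fact t)
  qed
  define B where "B = {u \<in> L. \<forall>A\<in>sets M. \<bar>\<phi> (chi_mult A u)\<bar> \<le> 1}"
  have "fbarrel L q B"
    unfolding fbarrel_def
  proof (intro conjI)
    show "B \<subseteq> L" unfolding B_def by blast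
    have "B = \<Inter> ((\<lambda>A. {u \<in> topspace (flc_topology L q). (\<phi> \<circ> chi_mult A) u \<in> cball 0 1}) ` sets M)"
    proof (rule set_eqI)
      fix u
      have "u \<in> \<Inter> ((\<lambda>A. {u \<in> topspace (flc_topology L q). (\<phi> \<circ> chi_mult A) u \<in> cball 0 1}) ` sets M)
         \<longleftrightarrow> (\<forall>A\<in>sets M. u \<in> L \<and> \<bar>\<phi> (chi_mult A u)\<bar> \<le> 1)"
        unfolding flc_topspace by (simp add: dist_real_def)
      also have "\<dots> \<longleftrightarrow> u \<in> B" unfolding B_def using sets.empty_sets[of M] by blast
      finally show "u \<in> B \<longleftrightarrow> u \<in> \<Inter> ((\<lambda>A. {u \<in> topspace (flc_topology L q). (\<phi> \<circ> chi_mult A) u \<in> cball 0 1}) ` sets M)"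
        by blast
    qed
    also have "closedin (flc_topology L q) \<dots>"
    proof (rule closedin_Inter)
      show "(\<lambda>A. {u \<in> topspace (flc_topology L q). (\<phi> \<circ> chi_mult A) u \<in> cball 0 1}) ` sets M \<noteq> {}"
        using sets.empty_sets[of M] by blast
    next
      fix S assume "S \<in> (\<lambda>A. {u \<in> topspace (flc_topology L q). (\<phi> \<circ> chi_mult A) u \<in> cball 0 1}) ` sets M"
      then obtain A where A: "A \<in> sets M" and S: "S = {u \<in> topspace (flc_topology L q). (\<phi> \<circ> chi_mult A) u \<in> cball 0 1}"
        by blast
      show "closedin (flc_topology L q) S" unfolding S
        by (rule closedin_continuous_map_preimage[OF continuous_map_compose[OF ct[rule_format, OF A] phic]]) auto
    qed
    finally show "closedin (flc_topology L q) B" .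
    show "\<forall>u\<in>B. \<forall>v\<in>B. \<forall>t. 0 \<le> t \<and> t \<le> 1 \<longrightarrow> fadd (fscale t u) (fscale (1 - t) v) \<in> B"
    proof (intro ballI allI impI)
      fix u v and t :: real assume u: "u \<in> B" and v: "v \<in> B" and t: "0 \<le> t \<and> t \<le> 1"
      have uL: "u \<in> L" and vL: "v \<in> L" using u v unfolding B_def by auto
      show "fadd (fscale t u) (fscale (1 - t) v) \<in> B" unfolding B_def
      proof (intro CollectI conjI ballI)
        show "fadd (fscale t u) (fscale (1 - t) v) \<in> L" using uL vL La Ls by blast
        fix A assume A: "A \<in> sets M"
        have cu: "chi_mult A u \<in> L" and cv: "chi_mult A v \<in> L" using cc A uL vL by auto
        have "\<phi> (chi_mult A (fadd (fscale t u) (fscale (1 - t) v))) = t * \<phi> (chi_mult A u) + (1 - t) * \<phi> (chi_mult A v)"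
        proof -
          have "\<phi> (fadd (fscale t (chi_mult A u)) (fscale (1 - t) (chi_mult A v)))
              = \<phi> (fscale t (chi_mult A u)) + \<phi> (fscale (1 - t) (chi_mult A v))"
            by (rule phia[OF Ls[OF cu] Ls[OF cv]])
          also have "\<dots> = t * \<phi> (chi_mult A u) + (1 - t) * \<phi> (chi_mult A v)"
            by (simp only: phis[OF cu] phis[OF cv])
          finally show ?thesis by (simp only: chi_add chi_scale)
        qed
        moreover have "\<bar>\<phi> (chi_mult A u)\<bar> \<le> 1" "\<bar>\<phi> (chi_mult A v)\<bar> \<le> 1" using u v A unfolding B_def by auto
        moreover have "\<bar>t * \<phi> (chi_mult A u) + (1 - t) * \<phi> (chi_mult A v)\<bar> \<le> 1"
        proof -
          have "\<bar>t * \<phi> (chi_mult A u) + (1 - t) * \<phi> (chi_mult A v)\<bar>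
              \<le> \<bar>t * \<phi> (chi_mult A u)\<bar> + \<bar>(1 - t) * \<phi> (chi_mult A v)\<bar>" by (rule abs_triangle_ineq)
          also have "\<dots> = t * \<bar>\<phi> (chi_mult A u)\<bar> + (1 - t) * \<bar>\<phi> (chi_mult A v)\<bar>"
            using t by (simp add: abs_mult)
          also have "\<dots> \<le> t * 1 + (1 - t) * 1"
            using t \<open>\<bar>\<phi> (chi_mult A u)\<bar> \<le> 1\<close> \<open>\<bar>\<phi> (chi_mult A v)\<bar> \<le> 1\<close>
            by (intro add_mono mult_left_mono) auto
          finally show ?thesis by simp
        qed
        ultimately show "\<bar>\<phi> (chi_mult A (fadd (fscale t u) (fscale (1 - t) v)))\<bar> \<le> 1"
          by simp
      qed
    qed
    show "\<forall>u\<in>B. \<forall>c. \<bar>c\<bar> \<le> 1 \<longrightarrow> fscale c u \<in> B"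
    proof (intro ballI allI impI)
      fix u c assume u: "u \<in> B" and c: "\<bar>c::real\<bar> \<le> 1"
      have uL: "u \<in> L" using u unfolding B_def by auto
      show "fscale c u \<in> B" unfolding B_def
      proof (intro CollectI conjI ballI)
        show "fscale c u \<in> L" using uL Ls by blast
        fix A assume A: "A \<in> sets M"
        have cu: "chi_mult A u \<in> L" using cc A uL by auto
        have "\<bar>\<phi> (chi_mult A (fscale c u))\<bar> = \<bar>c\<bar> * \<bar>\<phi> (chi_mult A u)\<bar>"
          unfolding chi_scale using cu phis by (simp add: abs_mult)
        also have "\<dots> \<le> 1 * 1" using u A c unfolding B_def by (intro mult_mono) auto
        finally show "\<bar>\<phi> (chi_mult A (fscale c u))\<bar> \<le> 1" by simp
      qed
    qed
    show "\<forall>u\<in>L. \<exists>r>0. \<forall>c. \<bar>c\<bar> \<le> r \<longrightarrow> fscale c u \<in> B"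
    proof
      fix u assume uL: "u \<in> L"
      obtain t where t: "t > 0" "\<forall>A\<in>sets M. \<bar>\<phi> (chi_mult A u)\<bar> \<le> t" using bnd[OF uL] by blast
      show "\<exists>r>0. \<forall>c. \<bar>c\<bar> \<le> r \<longrightarrow> fscale c u \<in> B"
      proof (intro exI[of _ "1/t"] conjI allI impI)
        show "1/t > 0" using t by simp
        fix c assume c: "\<bar>c\<bar> \<le> 1/t"
        show "fscale c u \<in> B" unfolding B_def
        proof (intro CollectI conjI ballI)
          show "fscale c u \<in> L" using uL Ls by blast
          fix A assume A: "A \<in> sets M"
          have cu: "chi_mult A u \<in> L" using cc A uL by auto
          have "\<bar>\<phi> (chi_mult A (fscale c u))\<bar> = \<bar>c\<bar> * \<bar>\<phi> (chi_mult A u)\<bar>"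
            unfolding chi_scale using cu phis by (simp add: abs_mult)
          also have "\<dots> \<le> (1/t) * t" using t A c by (intro mult_mono) auto
          finally show "\<bar>\<phi> (chi_mult A (fscale c u))\<bar> \<le> 1" using t by simp
        qed
      qed
    qed
  qed
  then obtain U where U: "openin (flc_topology L q) U" "fzero \<in> U" "U \<subseteq> B"
    using bar unfolding barreled_def by blast
  then obtain F e where Fe: "finite F" "e > 0" "{v\<in>L. \<forall>k\<in>F. q k (fadd v (fscale (-1) fzero)) < e} \<subseteq> U"
    unfolding flc_open by blast
  have key: "\<bar>\<psi> v\<bar> \<le> 1" if "v \<in> L" "\<forall>k\<in>F. q k v < e" for v
  proof -
    have "v \<in> B" using Fe(3) U(3) that by (auto simp: fadd_zero_neg)
    then show ?thesis unfolding B_def using H by blast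
  qed
  have "continuous_map (flc_topology L q) euclidean \<psi>"
    unfolding continuous_map_def flc_topspace
  proof (intro conjI allI impI)
    show "\<psi> \<in> L \<rightarrow> topspace euclidean" by simp
    fix V :: "real set" assume "openin euclidean V"
    then have V: "open V" by simp
    show "openin (flc_topology L q) {x \<in> L. \<psi> x \<in> V}"
      unfolding flc_open
    proof (intro conjI ballI)
      show "{x \<in> L. \<psi> x \<in> V} \<subseteq> L" by blast
      fix u0 assume u0: "u0 \<in> {x \<in> L. \<psi> x \<in> V}"
      then obtain \<epsilon> where eps: "\<epsilon> > 0" "\<forall>y. dist y (\<psi> u0) < \<epsilon> \<longrightarrow> y \<in> V"
        using V unfolding open_dist by blast
      have u0L: "u0 \<in> L" using u0 by blast
      show "\<exists>F e. finite F \<and> e > 0 \<and> {v\<in>L. \<forall>k\<in>F. q k (fadd v (fscale (-1) u0)) < e} \<subseteq> {x \<in> L. \<psi> x \<in> V}"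
      proof (intro exI[of _ F] exI[of _ "e * \<epsilon> / 2"] conjI subsetI)
        show "finite F" by (fact Fe(1))
        show "e * \<epsilon> / 2 > 0" using Fe eps by simp
        fix v assume v: "v \<in> {v\<in>L. \<forall>k\<in>F. q k (fadd v (fscale (-1) u0)) < e * \<epsilon> / 2}"
        then have vL: "v \<in> L" by blast
        define d where "d = fadd v (fscale (-1) u0)"
        have dL: "d \<in> L" unfolding d_def using vL u0L La Ls by blast
        define w where "w = fscale (2/\<epsilon>) d"
        have wL: "w \<in> L" unfolding w_def using dL Ls by blast
        have "\<forall>k\<in>F. q k w < e"
        proof
          fix k assume k: "k \<in> F"
          have "q k w = (2/\<epsilon>) * q k d" unfolding w_def using qs[OF dL] eps by simp
          also have "\<dots> < (2/\<epsilon>) * (e * \<epsilon> / 2)"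
            using v k eps unfolding d_def by (intro mult_strict_left_mono) auto
          also have "\<dots> = e" using eps by simp
          finally show "q k w < e" .
        qed
        then have "\<bar>\<psi> w\<bar> \<le> 1" using key wL by blast
        moreover have "\<psi> w = (2/\<epsilon>) * (\<psi> v - \<psi> u0)"
        proof -
          have "\<psi> d = \<psi> v + \<psi> (fscale (-1) u0)" unfolding d_def using padd vL Ls[OF u0L] by blast
          also have "\<psi> (fscale (-1) u0) = - \<psi> u0" using psc u0L by simp
          finally have "\<psi> d = \<psi> v - \<psi> u0" by simp
          then show ?thesis unfolding w_def using psc dL by simp
        qed
        moreover have "\<bar>(2/\<epsilon>) * (\<psi> v - \<psi> u0)\<bar> = (2/\<epsilon>) * \<bar>\<psi> v - \<psi> u0\<bar>"
          using eps by (simp only: abs_mult) simp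
        ultimately have "(2/\<epsilon>) * \<bar>\<psi> v - \<psi> u0\<bar> \<le> 1" by metis
        then have "(\<epsilon>/2) * ((2/\<epsilon>) * \<bar>\<psi> v - \<psi> u0\<bar>) \<le> (\<epsilon>/2) * 1"
          using eps by (intro mult_left_mono) auto
        then have "\<bar>\<psi> v - \<psi> u0\<bar> \<le> \<epsilon> / 2" using eps by simp
        then have "dist (\<psi> v) (\<psi> u0) < \<epsilon>" using eps by (simp add: dist_real_def)
        then show "v \<in> {x \<in> L. \<psi> x \<in> V}" using eps vL by blast
      qed
    qed
  qed
  then show ?thesis unfolding fdual_def using padd psc by blast
qed



definition Pv :: "'a set set \<Rightarrow> ('a set \<Rightarrow> real) \<Rightarrow> 'a set \<Rightarrow> real" where
  "Pv \<Sigma> \<nu> S = Sup {\<nu> B | B. B \<in> \<Sigma> \<and> B \<subseteq> S}"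

lemma Pv_basic:
  assumes emp: "{} \<in> \<Sigma>" and bd: "\<And>X. X \<in> \<Sigma> \<Longrightarrow> \<bar>\<nu> X\<bar> \<le> K"
  shows Pv_upper: "\<And>X S. X \<in> \<Sigma> \<Longrightarrow> X \<subseteq> S \<Longrightarrow> \<nu> X \<le> Pv \<Sigma> \<nu> S"
    and Pv_le: "\<And>S. Pv \<Sigma> \<nu> S \<le> K"
    and Pv_ge: "\<And>S. - K \<le> Pv \<Sigma> \<nu> S"
    and Pv_mono: "\<And>S T. S \<subseteq> T \<Longrightarrow> Pv \<Sigma> \<nu> S \<le> Pv \<Sigma> \<nu> T"
proof -
  have ne: "{\<nu> B | B. B \<in> \<Sigma> \<and> B \<subseteq> S} \<noteq> {}" for S using emp by blast
  have bdd: "bdd_above {\<nu> B | B. B \<in> \<Sigma> \<and> B \<subseteq> S}" for S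
    using bd unfolding bdd_above_def by (intro exI[of _ K]) (auto simp: abs_le_iff)
  show up: "\<nu> X \<le> Pv \<Sigma> \<nu> S" if "X \<in> \<Sigma>" "X \<subseteq> S" for X S
    unfolding Pv_def using that by (intro cSup_upper[OF _ bdd]) blast
  show "Pv \<Sigma> \<nu> S \<le> K" for S
    unfolding Pv_def using bd by (intro cSup_least[OF ne]) (auto simp: abs_le_iff)
  show "- K \<le> Pv \<Sigma> \<nu> S" for S
    using up[OF emp, of S] bd[OF emp] by (simp add: abs_le_iff)
  show "Pv \<Sigma> \<nu> S \<le> Pv \<Sigma> \<nu> T" if "S \<subseteq> T" for S T
    unfolding Pv_def using that by (intro cSup_subset_mono[OF ne bdd]) blast
qed

lemma Nv_mono:
  assumes emp: "{} \<in> \<Sigma>" and bd: "\<And>X. X \<in> \<Sigma> \<Longrightarrow> \<bar>\<nu> X\<bar> \<le> K"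
    and add: "\<And>X Y. X \<in> \<Sigma> \<Longrightarrow> Y \<in> \<Sigma> \<Longrightarrow> X \<subseteq> Y \<Longrightarrow> \<nu> Y = \<nu> X + \<nu> (Y - X)"
    and dif: "\<And>X Y. X \<in> \<Sigma> \<Longrightarrow> Y \<in> \<Sigma> \<Longrightarrow> Y - X \<in> \<Sigma>"
    and un: "\<And>X Y. X \<in> \<Sigma> \<Longrightarrow> Y \<in> \<Sigma> \<Longrightarrow> X \<union> Y \<in> \<Sigma>"
    and S: "S \<in> \<Sigma>" and T: "T \<in> \<Sigma>" and ST: "S \<subseteq> T"
  shows "Pv \<Sigma> \<nu> S - \<nu> S \<le> Pv \<Sigma> \<nu> T - \<nu> T"
proof -
  have TS: "T - S \<in> \<Sigma>" using dif S T by blast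
  have nT: "\<nu> T = \<nu> S + \<nu> (T - S)" using add S T ST by blast
  have "Pv \<Sigma> \<nu> S \<le> Pv \<Sigma> \<nu> T - \<nu> (T - S)"
    unfolding Pv_def[of _ _ S]
  proof (rule cSup_least)
    show "{\<nu> B | B. B \<in> \<Sigma> \<and> B \<subseteq> S} \<noteq> {}" using emp by blast
    fix x assume "x \<in> {\<nu> B | B. B \<in> \<Sigma> \<and> B \<subseteq> S}"
    then obtain B where B: "B \<in> \<Sigma>" "B \<subseteq> S" "x = \<nu> B" by blast
    have BU: "B \<union> (T - S) \<in> \<Sigma>" using un B TS by blast
    have "\<nu> (B \<union> (T - S)) = \<nu> B + \<nu> ((B \<union> (T - S)) - B)" using add[OF B(1) BU] by blast
    also have "(B \<union> (T - S)) - B = T - S" using B(2) by blast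
    finally have "\<nu> (B \<union> (T - S)) = \<nu> B + \<nu> (T - S)" .
    moreover have "\<nu> (B \<union> (T - S)) \<le> Pv \<Sigma> \<nu> T"
      using Pv_upper[where \<Sigma>=\<Sigma> and \<nu>=\<nu> and K=K, OF emp bd BU, of T] B(2) ST by blast
    ultimately show "x \<le> Pv \<Sigma> \<nu> T - \<nu> (T - S)" using B(3) by linarith
  qed
  then show ?thesis using nT by linarith
qed

lemma tendsto_ge:
  assumes dI: "directed_on I le" and dJ: "directed_on J le'"
    and f: "net_tendsto I le f c" and g: "net_tendsto J le' g d"
    and h: "\<forall>a\<in>I. net_eventually J le' (\<lambda>b. g b \<le> f a)"
  shows "d \<le> c"
proof -
  have "- c \<le> - d"
    using tendsto_le[OF dI dJ tendsto_neg[OF f] tendsto_neg[OF g]] h by simp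
  then show ?thesis by simp
qed

lemma G_lim:
  assumes dI: "directed_on I le" and dJ: "directed_on J le'"
    and OI: "\<Omega> ` I \<subseteq> \<Sigma>" and OJ: "\<Omega>' ` J \<subseteq> \<Sigma>"
    and mono: "\<And>S T. S \<in> \<Sigma> \<Longrightarrow> T \<in> \<Sigma> \<Longrightarrow> S \<subseteq> T \<Longrightarrow> G S \<le> G T"
    and bd: "\<And>S. S \<in> \<Sigma> \<Longrightarrow> \<bar>G S\<bar> \<le> K"
    and H: "(isotone_net I le \<Omega> \<and> isotone_net J le' \<Omega>' \<and>
            (\<forall>a\<in>I. net_eventually J le' (\<lambda>b. \<Omega> a \<subseteq> \<Omega>' b)) \<and>
            (\<forall>b\<in>J. net_eventually I le (\<lambda>a. \<Omega>' b \<subseteq> \<Omega> a)))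
          \<or> (antitone_net I le \<Omega> \<and> antitone_net J le' \<Omega>' \<and>
            (\<forall>a\<in>I. net_eventually J le' (\<lambda>b. \<Omega>' b \<subseteq> \<Omega> a)) \<and>
            (\<forall>b\<in>J. net_eventually I le (\<lambda>a. \<Omega> a \<subseteq> \<Omega>' b)))"
  shows "\<exists>c. net_tendsto I le (\<lambda>a. G (\<Omega> a)) c \<and> net_tendsto J le' (\<lambda>b. G (\<Omega>' b)) c"
proof -
  have bdI: "\<And>a. a \<in> I \<Longrightarrow> \<bar>G (\<Omega> a)\<bar> \<le> K" using bd OI by blast
  have bdJ: "\<And>b. b \<in> J \<Longrightarrow> \<bar>G (\<Omega>' b)\<bar> \<le> K" using bd OJ by blast
  have OIa: "\<And>a. a \<in> I \<Longrightarrow> \<Omega> a \<in> \<Sigma>" using OI by blast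
  have OJa: "\<And>a. a \<in> J \<Longrightarrow> \<Omega>' a \<in> \<Sigma>" using OJ by blast
  from H show ?thesis
  proof
    assume h: "isotone_net I le \<Omega> \<and> isotone_net J le' \<Omega>' \<and>
            (\<forall>a\<in>I. net_eventually J le' (\<lambda>b. \<Omega> a \<subseteq> \<Omega>' b)) \<and>
            (\<forall>b\<in>J. net_eventually I le (\<lambda>a. \<Omega>' b \<subseteq> \<Omega> a))"
    have cI: "net_tendsto I le (\<lambda>a. G (\<Omega> a)) (SUP a\<in>I. G (\<Omega> a))"
    proof (rule tendsto_incr[OF dI])
      show "G (\<Omega> a) \<le> G (\<Omega> b)" if "a \<in> I" "b \<in> I" "le a b" for a b
        using mono[OF OIa[OF that(1)] OIa[OF that(2)]] h that unfolding isotone_net_def by blast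
      show "G (\<Omega> a) \<le> K" if "a \<in> I" for a using bdI[OF that] by (simp add: abs_le_iff)
    qed
    have cJ: "net_tendsto J le' (\<lambda>b. G (\<Omega>' b)) (SUP b\<in>J. G (\<Omega>' b))"
    proof (rule tendsto_incr[OF dJ])
      show "G (\<Omega>' a) \<le> G (\<Omega>' b)" if "a \<in> J" "b \<in> J" "le' a b" for a b
        using mono[OF OJa[OF that(1)] OJa[OF that(2)]] h that unfolding isotone_net_def by blast
      show "G (\<Omega>' a) \<le> K" if "a \<in> J" for a using bdJ[OF that] by (simp add: abs_le_iff)
    qed
    have "(SUP a\<in>I. G (\<Omega> a)) \<le> (SUP b\<in>J. G (\<Omega>' b))"
    proof (rule tendsto_le[OF dI dJ cI cJ], intro ballI)
      fix a assume a: "a \<in> I"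
      show "net_eventually J le' (\<lambda>b. G (\<Omega> a) \<le> G (\<Omega>' b))"
        apply (rule ev_mono[of J le' "\<lambda>b. \<Omega> a \<subseteq> \<Omega>' b"])
        using h a apply blast
        by (rule mono[OF OIa[OF a] OJa]; assumption)
    qed
    moreover have "(SUP b\<in>J. G (\<Omega>' b)) \<le> (SUP a\<in>I. G (\<Omega> a))"
    proof (rule tendsto_le[OF dJ dI cJ cI], intro ballI)
      fix b assume b: "b \<in> J"
      show "net_eventually I le (\<lambda>a. G (\<Omega>' b) \<le> G (\<Omega> a))"
        apply (rule ev_mono[of I le "\<lambda>a. \<Omega>' b \<subseteq> \<Omega> a"])
        using h b apply blast
        by (rule mono[OF OJa[OF b] OIa]; assumption)
    qed
    ultimately show ?thesis using cI cJ by auto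
  next
    assume h: "antitone_net I le \<Omega> \<and> antitone_net J le' \<Omega>' \<and>
            (\<forall>a\<in>I. net_eventually J le' (\<lambda>b. \<Omega>' b \<subseteq> \<Omega> a)) \<and>
            (\<forall>b\<in>J. net_eventually I le (\<lambda>a. \<Omega> a \<subseteq> \<Omega>' b))"
    obtain c where cI: "net_tendsto I le (\<lambda>a. G (\<Omega> a)) c"
    proof -
      have "\<exists>c. net_tendsto I le (\<lambda>a. G (\<Omega> a)) c"
      proof (rule tendsto_decr[OF dI])
        show "G (\<Omega> b) \<le> G (\<Omega> a)" if "a \<in> I" "b \<in> I" "le a b" for a b
          using mono[OF OIa[OF that(2)] OIa[OF that(1)]] h that unfolding antitone_net_def by blast
        show "- K \<le> G (\<Omega> a)" if "a \<in> I" for a using bdI[OF that] by (simp add: abs_le_iff)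
      qed
      then show ?thesis using that by blast
    qed
    obtain d where cJ: "net_tendsto J le' (\<lambda>b. G (\<Omega>' b)) d"
    proof -
      have "\<exists>d. net_tendsto J le' (\<lambda>b. G (\<Omega>' b)) d"
      proof (rule tendsto_decr[OF dJ])
        show "G (\<Omega>' b) \<le> G (\<Omega>' a)" if "a \<in> J" "b \<in> J" "le' a b" for a b
          using mono[OF OJa[OF that(2)] OJa[OF that(1)]] h that unfolding antitone_net_def by blast
        show "- K \<le> G (\<Omega>' a)" if "a \<in> J" for a using bdJ[OF that] by (simp add: abs_le_iff)
      qed
      then show ?thesis using that by blast
    qed
    have "d \<le> c"
    proof (rule tendsto_ge[OF dI dJ cI cJ], intro ballI)
      fix a assume a: "a \<in> I"
      show "net_eventually J le' (\<lambda>b. G (\<Omega>' b) \<le> G (\<Omega> a))"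
        apply (rule ev_mono[of J le' "\<lambda>b. \<Omega>' b \<subseteq> \<Omega> a"])
        using h a apply blast
        by (rule mono[OF OJa OIa[OF a]]; assumption)
    qed
    moreover have "c \<le> d"
    proof (rule tendsto_ge[OF dJ dI cJ cI], intro ballI)
      fix b assume b: "b \<in> J"
      show "net_eventually I le (\<lambda>a. G (\<Omega> a) \<le> G (\<Omega>' b))"
        apply (rule ev_mono[of I le "\<lambda>a. \<Omega> a \<subseteq> \<Omega>' b"])
        using h b apply blast
        by (rule mono[OF OIa OJa[OF b]]; assumption)
    qed
    ultimately show ?thesis using cI cJ by auto
  qed
qed



lemma phi_bnd:
  fixes q :: "'k \<Rightarrow> ('a \<Rightarrow> 'x::real_vector) \<Rightarrow> real" and M :: "'a measure"
  assumes L_lc: "flc_space L q"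
  and bdd: "\<forall>u\<in>L. fbounded L q {chi_mult A u | A. A \<in> sets M}"
  and phi: "\<phi> \<in> fdual L q" and u: "u \<in> L"
  shows "\<exists>t>0. \<forall>A\<in>sets M. \<bar>\<phi> (chi_mult A u)\<bar> \<le> t"
proof -
  have z: "fzero \<in> L" using L_lc unfolding flc_space_def fsubspace_def by auto
  have phis: "\<And>u c. u \<in> L \<Longrightarrow> \<phi> (fscale c u) = c * \<phi> u"
    and phic: "continuous_map (flc_topology L q) euclidean \<phi>"
    using phi unfolding fdual_def by auto
  have phi0: "\<phi> fzero = 0" using phis[OF z, of 0] by (simp add: fscale0)
  define U0 where "U0 = {v \<in> topspace (flc_topology L q). \<phi> v \<in> ball 0 1}"
  have "openin (flc_topology L q) U0" unfolding U0_def
    by (rule openin_continuous_map_preimage[OF phic]) auto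
  moreover have "fzero \<in> U0" unfolding U0_def flc_topspace using z phi0 by simp
  ultimately obtain t where t: "t > 0" "\<forall>s. \<bar>s\<bar> \<ge> t \<longrightarrow> {chi_mult A u | A. A \<in> sets M} \<subseteq> fscale s ` U0"
    using bdd u unfolding fbounded_def by blast
  show ?thesis
  proof (intro exI[of _ t] conjI ballI)
    fix A assume A: "A \<in> sets M"
    have "{chi_mult A u | A. A \<in> sets M} \<subseteq> fscale t ` U0" using t(2) abs_ge_self[of t] by blast
    then have "chi_mult A u \<in> fscale t ` U0" using A by blast
    then obtain v where v: "v \<in> U0" "chi_mult A u = fscale t v" by blast
    then have "v \<in> L" "\<bar>\<phi> v\<bar> < 1" unfolding U0_def flc_topspace by auto
    then have "\<bar>\<phi> (chi_mult A u)\<bar> = t * \<bar>\<phi> v\<bar>" using v phis t by (simp add: abs_mult)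
    also have "\<dots> \<le> t * 1" using \<open>\<bar>\<phi> v\<bar> < 1\<close> t by (intro mult_left_mono) auto
    finally show "\<bar>\<phi> (chi_mult A u)\<bar> \<le> t" by simp
  qed (fact t)
qed

lemma main_lemma:
  fixes M :: "'a measure"
    and L :: "('a \<Rightarrow> 'x::real_vector) set"
    and q :: "'k \<Rightarrow> ('a \<Rightarrow> 'x) \<Rightarrow> real"
    and I :: "'i set" and le :: "'i \<Rightarrow> 'i \<Rightarrow> bool" and \<Omega> :: "'i \<Rightarrow> 'a set"
    and J :: "'j set" and le' :: "'j \<Rightarrow> 'j \<Rightarrow> bool" and \<Omega>' :: "'j \<Rightarrow> 'a set"
  assumes L_lc: "flc_space L q"
    and L_barreled: "barreled L q"
    and chi_closed: "\<forall>A\<in>sets M. \<forall>u\<in>L. chi_mult A u \<in> L"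
    and chi_cont: "\<forall>A\<in>sets M. continuous_map (flc_topology L q) (flc_topology L q) (chi_mult A)"
    and chi_bdd: "\<forall>u\<in>L. fbounded L q {chi_mult A u | A. A \<in> sets M}"
    and I_dir: "directed_on I le" and J_dir: "directed_on J le'"
    and \<Omega>_meas: "\<Omega> ` I \<subseteq> sets M" and \<Omega>'_meas: "\<Omega>' ` J \<subseteq> sets M"
    and H: "(isotone_net I le \<Omega> \<and> isotone_net J le' \<Omega>' \<and>
            (\<forall>a\<in>I. net_eventually J le' (\<lambda>b. \<Omega> a \<subseteq> \<Omega>' b)) \<and>
            (\<forall>b\<in>J. net_eventually I le (\<lambda>a. \<Omega>' b \<subseteq> \<Omega> a)))
          \<or> (antitone_net I le \<Omega> \<and> antitone_net J le' \<Omega>' \<and>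
            (\<forall>a\<in>I. net_eventually J le' (\<lambda>b. \<Omega>' b \<subseteq> \<Omega> a)) \<and>
            (\<forall>b\<in>J. net_eventually I le (\<lambda>a. \<Omega> a \<subseteq> \<Omega>' b)))"
  shows "same_adj_limit L q I le \<Omega> J le' \<Omega>'"
  unfolding same_adj_limit_def
proof (intro ballI)
  fix \<phi> assume phi: "\<phi> \<in> fdual L q"
  have La: "\<And>u v. u \<in> L \<Longrightarrow> v \<in> L \<Longrightarrow> fadd u v \<in> L"
    and Ls: "\<And>u c. u \<in> L \<Longrightarrow> fscale c u \<in> L"
    using L_lc unfolding flc_space_def fsubspace_def by auto
  have phia: "\<And>u v. u \<in> L \<Longrightarrow> v \<in> L \<Longrightarrow> \<phi> (fadd u v) = \<phi> u + \<phi> v"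
    and phis: "\<And>u c. u \<in> L \<Longrightarrow> \<phi> (fscale c u) = c * \<phi> u"
    using phi unfolding fdual_def by auto
  have lim: "\<exists>c. net_tendsto I le (\<lambda>a. \<phi> (chi_mult (\<Omega> a) u)) c \<and> net_tendsto J le' (\<lambda>b. \<phi> (chi_mult (\<Omega>' b) u)) c"
    if u: "u \<in> L" for u
  proof -
    define \<nu> where "\<nu> A = \<phi> (chi_mult A u)" for A
    obtain K where K: "\<And>A. A \<in> sets M \<Longrightarrow> \<bar>\<nu> A\<bar> \<le> K"
      using phi_bnd[OF L_lc chi_bdd phi u] unfolding \<nu>_def by blast
    have emp: "{} \<in> sets M" by simp
    have add: "\<nu> Y = \<nu> X + \<nu> (Y - X)" if "X \<in> sets M" "Y \<in> sets M" "X \<subseteq> Y" for X Y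
    proof -
      have "Y - X \<in> sets M" using that by auto
      then show ?thesis unfolding \<nu>_def chi_split[OF that(3), of u]
        using phia chi_closed that u by blast
    qed
    have dif: "\<And>X Y. X \<in> sets M \<Longrightarrow> Y \<in> sets M \<Longrightarrow> Y - X \<in> sets M" by auto
    have un: "\<And>X Y. X \<in> sets M \<Longrightarrow> Y \<in> sets M \<Longrightarrow> X \<union> Y \<in> sets M" by auto
    define P where "P = Pv (sets M) \<nu>"
    define N where "N S = P S - \<nu> S" for S
    have cP: "\<exists>c. net_tendsto I le (\<lambda>a. P (\<Omega> a)) c \<and> net_tendsto J le' (\<lambda>b. P (\<Omega>' b)) c"
    proof (rule G_lim[OF I_dir J_dir \<Omega>_meas \<Omega>'_meas _ _ H])
      show "P S \<le> P T" if "S \<subseteq> T" for S T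
        unfolding P_def using Pv_mono[where \<Sigma>="sets M" and \<nu>=\<nu> and K=K, OF emp K that] .
      show "\<bar>P S\<bar> \<le> K" for S
        unfolding P_def using Pv_le[where \<Sigma>="sets M" and \<nu>=\<nu> and K=K, OF emp K, of S]
          Pv_ge[where \<Sigma>="sets M" and \<nu>=\<nu> and K=K, OF emp K, of S] by (simp add: abs_le_iff)
    qed
    have cN: "\<exists>c. net_tendsto I le (\<lambda>a. N (\<Omega> a)) c \<and> net_tendsto J le' (\<lambda>b. N (\<Omega>' b)) c"
    proof (rule G_lim[OF I_dir J_dir \<Omega>_meas \<Omega>'_meas _ _ H])
      show "N S \<le> N T" if "S \<in> sets M" "T \<in> sets M" "S \<subseteq> T" for S T
        unfolding N_def P_def using Nv_mono[where \<Sigma>="sets M" and \<nu>=\<nu> and K=K, OF emp K add dif un that] .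
      show "\<bar>N S\<bar> \<le> K + K" if "S \<in> sets M" for S
        unfolding N_def P_def using Pv_le[where \<Sigma>="sets M" and \<nu>=\<nu> and K=K, OF emp K, of S]
          Pv_ge[where \<Sigma>="sets M" and \<nu>=\<nu> and K=K, OF emp K, of S] K[OF that] by (simp add: abs_le_iff)
    qed
    obtain c1 where c1: "net_tendsto I le (\<lambda>a. P (\<Omega> a)) c1" "net_tendsto J le' (\<lambda>b. P (\<Omega>' b)) c1"
      using cP by blast
    obtain c2 where c2: "net_tendsto I le (\<lambda>a. N (\<Omega> a)) c2" "net_tendsto J le' (\<lambda>b. N (\<Omega>' b)) c2"
      using cN by blast
    have "net_tendsto I le (\<lambda>a. P (\<Omega> a) + - N (\<Omega> a)) (c1 + - c2)"
      by (rule tendsto_add[OF I_dir c1(1) tendsto_neg[OF c2(1)]])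
    then have t1: "net_tendsto I le (\<lambda>a. \<phi> (chi_mult (\<Omega> a) u)) (c1 + - c2)"
      by (rule tendsto_cong) (simp add: N_def \<nu>_def)
    have "net_tendsto J le' (\<lambda>b. P (\<Omega>' b) + - N (\<Omega>' b)) (c1 + - c2)"
      by (rule tendsto_add[OF J_dir c1(2) tendsto_neg[OF c2(2)]])
    then have t2: "net_tendsto J le' (\<lambda>b. \<phi> (chi_mult (\<Omega>' b) u)) (c1 + - c2)"
      by (rule tendsto_cong) (simp add: N_def \<nu>_def)
    show ?thesis using t1 t2 by blast
  qed
  define \<psi> where "\<psi> u = (SOME c. net_tendsto I le (\<lambda>a. \<phi> (chi_mult (\<Omega> a) u)) c \<and>
      net_tendsto J le' (\<lambda>b. \<phi> (chi_mult (\<Omega>' b) u)) c)" for u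
  have psi: "net_tendsto I le (\<lambda>a. \<phi> (chi_mult (\<Omega> a) u)) (\<psi> u) \<and>
      net_tendsto J le' (\<lambda>b. \<phi> (chi_mult (\<Omega>' b) u)) (\<psi> u)" if "u \<in> L" for u
    unfolding \<psi>_def by (rule someI_ex[OF lim[OF that]])
  have ccI: "\<And>a u. a \<in> I \<Longrightarrow> u \<in> L \<Longrightarrow> chi_mult (\<Omega> a) u \<in> L"
    using chi_closed \<Omega>_meas by blast
  have padd: "\<forall>u\<in>L. \<forall>v\<in>L. \<psi> (fadd u v) = \<psi> u + \<psi> v"
  proof (intro ballI)
    fix u v assume u: "u \<in> L" and v: "v \<in> L"
    have "net_tendsto I le (\<lambda>a. \<phi> (chi_mult (\<Omega> a) u) + \<phi> (chi_mult (\<Omega> a) v)) (\<psi> u + \<psi> v)"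
      using tendsto_add[OF I_dir] psi u v by blast
    then have "net_tendsto I le (\<lambda>a. \<phi> (chi_mult (\<Omega> a) (fadd u v))) (\<psi> u + \<psi> v)"
      by (rule tendsto_cong) (simp only: chi_add phia[OF ccI[OF _ u] ccI[OF _ v]])
    moreover have "net_tendsto I le (\<lambda>a. \<phi> (chi_mult (\<Omega> a) (fadd u v))) (\<psi> (fadd u v))"
      using psi La u v by blast
    ultimately show "\<psi> (fadd u v) = \<psi> u + \<psi> v" using tendsto_unique[OF I_dir] by metis
  qed
  have psc: "\<forall>u\<in>L. \<forall>c. \<psi> (fscale c u) = c * \<psi> u"
  proof (intro ballI allI)
    fix u c assume u: "u \<in> L"
    have "net_tendsto I le (\<lambda>a. c * \<phi> (chi_mult (\<Omega> a) u)) (c * \<psi> u)"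
      using tendsto_cmult psi u by blast
    then have "net_tendsto I le (\<lambda>a. \<phi> (chi_mult (\<Omega> a) (fscale c u))) (c * \<psi> u)"
      by (rule tendsto_cong) (simp only: chi_scale phis[OF ccI[OF _ u]])
    moreover have "net_tendsto I le (\<lambda>a. \<phi> (chi_mult (\<Omega> a) (fscale c u))) (\<psi> (fscale c u))"
      using psi Ls u by blast
    ultimately show "\<psi> (fscale c u) = c * \<psi> u" using tendsto_unique[OF I_dir] by metis
  qed
  have pb: "\<bar>\<psi> u\<bar> \<le> 1" if "u \<in> L" "\<forall>A\<in>sets M. \<bar>\<phi> (chi_mult A u)\<bar> \<le> 1" for u
    using tendsto_bound[OF I_dir conjunct1[OF psi[OF that(1)]]] that(2) \<Omega>_meas by blast
  have "\<psi> \<in> fdual L q"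
    by (rule cont_lemma[OF L_lc L_barreled chi_closed chi_cont chi_bdd phi padd psc pb])
  then show "\<exists>\<psi>\<in>fdual L q. weakstar_adj_limit L I le \<Omega> \<phi> \<psi> \<and> weakstar_adj_limit L J le' \<Omega>' \<phi> \<psi>"
    unfolding weakstar_adj_limit_def using psi by blast
qed


theorem propositionA2:
  fixes M :: "'a measure"
    and pX :: "'kx \<Rightarrow> 'x::real_vector \<Rightarrow> real"
    and L :: "('a \<Rightarrow> 'x) set"
    and q :: "'k \<Rightarrow> ('a \<Rightarrow> 'x) \<Rightarrow> real"
    and I :: "'i set" and le :: "'i \<Rightarrow> 'i \<Rightarrow> bool" and \<Omega> :: "'i \<Rightarrow> 'a set"
    and J :: "'j set" and le' :: "'j \<Rightarrow> 'j \<Rightarrow> bool" and \<Omega>' :: "'j \<Rightarrow> 'a set"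
  assumes X_lc: "lc_space (UNIV :: 'x set) pX"
    and L_lc: "flc_space L q"
    and L_meas: "\<forall>u\<in>L. u \<in> measurable M (sigma UNIV {U. openin (lc_topology (UNIV :: 'x set) pX) U})"
    and L_barreled: "barreled L q"
    and chi_closed: "\<forall>A\<in>sets M. \<forall>u\<in>L. chi_mult A u \<in> L"
    and chi_cont: "\<forall>A\<in>sets M. continuous_map (flc_topology L q) (flc_topology L q) (chi_mult A)"
    and chi_bdd: "\<forall>u\<in>L. fbounded L q {chi_mult A u | A. A \<in> sets M}"
    and I_dir: "directed_on I le" and J_dir: "directed_on J le'"
    and \<Omega>_meas: "\<Omega> ` I \<subseteq> sets M" and \<Omega>'_meas: "\<Omega>' ` J \<subseteq> sets M"
  shows "((isotone_net I le \<Omega> \<and> isotone_net J le' \<Omega>' \<and>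
            (\<forall>a\<in>I. net_eventually J le' (\<lambda>b. \<Omega> a \<subseteq> \<Omega>' b)) \<and>
            (\<forall>b\<in>J. net_eventually I le (\<lambda>a. \<Omega>' b \<subseteq> \<Omega> a)))
          \<or> (antitone_net I le \<Omega> \<and> antitone_net J le' \<Omega>' \<and>
            (\<forall>a\<in>I. net_eventually J le' (\<lambda>b. \<Omega>' b \<subseteq> \<Omega> a)) \<and>
            (\<forall>b\<in>J. net_eventually I le (\<lambda>a. \<Omega> a \<subseteq> \<Omega>' b)))
          \<longrightarrow> same_adj_limit L q I le \<Omega> J le' \<Omega>')
       \<and> (\<forall>\<SS>. \<SS> \<subseteq> sets M \<and>
            isotone_net I le \<Omega> \<and> \<Omega> ` I \<subseteq> \<SS> \<and> (\<forall>S\<in>\<SS>. net_eventually I le (\<lambda>a. S \<subseteq> \<Omega> a)) \<and>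
            isotone_net J le' \<Omega>' \<and> \<Omega>' ` J \<subseteq> \<SS> \<and> (\<forall>S\<in>\<SS>. net_eventually J le' (\<lambda>b. S \<subseteq> \<Omega>' b))
          \<longrightarrow> same_adj_limit L q I le \<Omega> J le' \<Omega>')"
  proof (rule conjI)
  show "((isotone_net I le \<Omega> \<and> isotone_net J le' \<Omega>' \<and>
            (\<forall>a\<in>I. net_eventually J le' (\<lambda>b. \<Omega> a \<subseteq> \<Omega>' b)) \<and>
            (\<forall>b\<in>J. net_eventually I le (\<lambda>a. \<Omega>' b \<subseteq> \<Omega> a)))
          \<or> (antitone_net I le \<Omega> \<and> antitone_net J le' \<Omega>' \<and>
            (\<forall>a\<in>I. net_eventually J le' (\<lambda>b. \<Omega>' b \<subseteq> \<Omega> a)) \<and>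
            (\<forall>b\<in>J. net_eventually I le (\<lambda>a. \<Omega> a \<subseteq> \<Omega>' b)))
          \<longrightarrow> same_adj_limit L q I le \<Omega> J le' \<Omega>')"
    using main_lemma[OF L_lc L_barreled chi_closed chi_cont chi_bdd I_dir J_dir \<Omega>_meas \<Omega>'_meas] by blast
  show "\<forall>\<SS>. \<SS> \<subseteq> sets M \<and>
            isotone_net I le \<Omega> \<and> \<Omega> ` I \<subseteq> \<SS> \<and> (\<forall>S\<in>\<SS>. net_eventually I le (\<lambda>a. S \<subseteq> \<Omega> a)) \<and>
            isotone_net J le' \<Omega>' \<and> \<Omega>' ` J \<subseteq> \<SS> \<and> (\<forall>S\<in>\<SS>. net_eventually J le' (\<lambda>b. S \<subseteq> \<Omega>' b))
          \<longrightarrow> same_adj_limit L q I le \<Omega> J le' \<Omega>'"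
  proof (intro allI impI)
    fix SS :: "'a set set"
    assume h: "SS \<subseteq> sets M \<and>
            isotone_net I le \<Omega> \<and> \<Omega> ` I \<subseteq> SS \<and> (\<forall>S\<in>SS. net_eventually I le (\<lambda>a. S \<subseteq> \<Omega> a)) \<and>
            isotone_net J le' \<Omega>' \<and> \<Omega>' ` J \<subseteq> SS \<and> (\<forall>S\<in>SS. net_eventually J le' (\<lambda>b. S \<subseteq> \<Omega>' b))"
    have 1: "\<forall>a\<in>I. net_eventually J le' (\<lambda>b. \<Omega> a \<subseteq> \<Omega>' b)" using h by blast
    have 2: "\<forall>b\<in>J. net_eventually I le (\<lambda>a. \<Omega>' b \<subseteq> \<Omega> a)" using h by blast
    show "same_adj_limit L q I le \<Omega> J le' \<Omega>'"
      using main_lemma[OF L_lc L_barreled chi_closed chi_cont chi_bdd I_dir J_dir \<Omega>_meas \<Omega>'_meas] h 1 2 by blast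
  qed
qed

end
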